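(* Let $\gamma\colon I\to\mathbb{R}^2$ be a simple, smooth, closed curve (a smooth embedding of a circle into the plane) whose signed curvature satisfies $|k(s)|<1$ for all $s\in I$. Then the closed region bounded by $\gamma$ is locally drawable and locally closed-disk drawable.
   Context: For a curve parametrized by arc length, with unit normal $n(s)$ obtained by rotating $\gamma'(s)$ by $90^\circ$ counterclockwise, the signed curvature $k(s)$ is defined by $\gamma''(s)=k(s)n(s)$. For $A\subseteq\mathbb{R}^2$ let $N(A)=\{x: |x-a|<1 \text{ for some } a\in A\}$ and $N_{\le}(A)=\{x: |x-a|\le 1 \text{ for some } a\in A\}$. Let $\mathcal{D}_1=\{N(A_1): A_1\subseteq\mathbb{R}^2\}$ and for $n\ge 2$ let $\mathcal{D}_n=\{D\cup N(A_n): D\in\mathcal{D}_{n-1}, A_n\subseteq\mathbb{R}^2\}$ if $n$ is odd and $\mathcal{D}_n=\{D\setminus N(A_n): D\in\mathcal{D}_{n-1}, A_n\subseteq\mathbb{R}^2\}$ if $n$ is even; $\mathcal{D}=\bigcup_n\mathcal{D}_n$ is the collection of drawable sets, and $\mathcal{D}_{\le}$ (closed-disk drawable sets) is defined the same way with $N_{\le}$ in place of $N$. A set $B\subseteq\mathbb{R}^2$ is locally drawable if every $x\in\mathbb{R}^2$ has a neighborhood $U$ such that there is $D\in\mathcal{D}$ with $U\cap B=U\cap D$; locally closed-disk drawable is defined analogously with $D\in\mathcal{D}_{\le}$. *)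

theory Defs
  imports "HOL-Analysis.Analysis"
begin

text \<open>The plane R^2 is modelled by the complex numbers; rotation by 90 degrees
  counterclockwise is multiplication by the imaginary unit.\<close>

definition Nbhd :: "complex set \<Rightarrow> complex set" where
  "Nbhd A = {x. \<exists>a\<in>A. dist x a < 1}"

definition Nbhd_le :: "complex set \<Rightarrow> complex set" where
  "Nbhd_le A = {x. \<exists>a\<in>A. dist x a \<le> 1}"

text \<open>The hierarchy D_n (index n >= 1; level 0 is empty and unused),
  parametrised by the neighbourhood operator.\<close>
fun draw_level :: "(complex set \<Rightarrow> complex set) \<Rightarrow> nat \<Rightarrow> complex set set" where
  "draw_level N 0 = {}"
| "draw_level N (Suc 0) = {N A | A. True}"
| "draw_level N (Suc (Suc m)) =
     (if odd (Suc (Suc m))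
      then {D \<union> N A | D A. D \<in> draw_level N (Suc m)}
      else {D - N A | D A. D \<in> draw_level N (Suc m)})"

definition drawable_sets :: "complex set set" where
  "drawable_sets = (\<Union>n. draw_level Nbhd n)"

definition closed_disk_drawable_sets :: "complex set set" where
  "closed_disk_drawable_sets = (\<Union>n. draw_level Nbhd_le n)"

definition locally_drawable :: "complex set \<Rightarrow> bool" where
  "locally_drawable B \<longleftrightarrow>
     (\<forall>x. \<exists>U. open U \<and> x \<in> U \<and> (\<exists>D\<in>drawable_sets. U \<inter> B = U \<inter> D))"

definition locally_closed_disk_drawable :: "complex set \<Rightarrow> bool" where
  "locally_closed_disk_drawable B \<longleftrightarrow>
     (\<forall>x. \<exists>U. open U \<and> x \<in> U \<and> (\<exists>D\<in>closed_disk_drawable_sets. U \<inter> B = U \<inter> D))"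

definition smooth_curve :: "(real \<Rightarrow> complex) \<Rightarrow> bool" where
  "smooth_curve \<gamma> \<longleftrightarrow>
     (\<exists>D :: nat \<Rightarrow> real \<Rightarrow> complex. D 0 = \<gamma> \<and>
        (\<forall>n t. (D n has_vector_derivative D (Suc n) t) (at t)))"

definition unit_normal :: "(real \<Rightarrow> complex) \<Rightarrow> real \<Rightarrow> complex" where
  "unit_normal \<gamma> s = \<i> * vector_derivative \<gamma> (at s)"

definition second_deriv :: "(real \<Rightarrow> complex) \<Rightarrow> real \<Rightarrow> complex" where
  "second_deriv \<gamma> s = vector_derivative (\<lambda>t. vector_derivative \<gamma> (at t)) (at s)"

end

theory Submission
  imports Defs
begin

lemma inner_deriv:
  fixes f g :: "real \<Rightarrow> 'a::real_inner"
  assumes "(f has_vector_derivative f') (at x)" "(g has_vector_derivative g') (at x)"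
  shows "((\<lambda>x. f x \<bullet> g x) has_real_derivative (f x \<bullet> g' + f' \<bullet> g x)) (at x)"
proof -
  have "((\<lambda>x. f x \<bullet> g x) has_derivative (\<lambda>h. f x \<bullet> (h *\<^sub>R g') + (h *\<^sub>R f') \<bullet> g x)) (at x)"
    using has_derivative_inner[OF assms[unfolded has_vector_derivative_def]] by simp
  then show ?thesis unfolding has_field_derivative_def
    by (rule has_derivative_eq_rhs) (auto simp: algebra_simps)
qed

lemma lipschitz_curve:
  fixes g :: "real \<Rightarrow> 'a::real_inner"
  assumes "\<And>t. (g has_vector_derivative g' t) (at t)" "\<And>t. norm (g' t) = 1"
  shows "norm (g a - g b) \<le> \<bar>a - b\<bar>"
proof -
  have cont: "continuous_on S g" for S
    using assms(1) by (meson continuous_at_imp_continuous_on has_vector_derivative_continuous)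
  have *: "norm (g b - g a) \<le> b - a" if ab: "a < b" for a b
  proof -
    obtain x where "norm (g b - g a) \<le> norm ((b - a) *\<^sub>R g' x)"
      using mvt_general[OF ab cont, of "\<lambda>x h. h *\<^sub>R g' x"] assms(1)
      unfolding has_vector_derivative_def by blast
    then show ?thesis using ab assms(2) by simp
  qed
  show ?thesis
    using *[of a b] *[of b a] by (cases a b rule: linorder_cases) (auto simp: norm_minus_commute)
qed

lemma convex_est:
  fixes g :: "real \<Rightarrow> 'a::real_inner"
  assumes d1: "\<And>t. (g has_vector_derivative g1 t) (at t)"
    and d2: "\<And>t. (g1 has_vector_derivative g2 t) (at t)"
    and n1: "\<And>t. norm (g1 t) = 1"
    and bnd: "\<And>v. \<bar>v - s0\<bar> \<le> \<eta> \<Longrightarrow> norm (g2 v) \<le> \<kappa>"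
    and kap: "\<kappa> \<ge> 0" "\<kappa> * (r + 2 * \<eta>) \<le> 1"
    and t: "\<bar>t - s0\<bar> \<le> \<eta>" and u: "\<bar>u - s0\<bar> \<le> \<eta>"
    and orth: "(g t - c) \<bullet> g1 t = 0" and r: "norm (g t - c) = r"
  shows "norm (g u - c) \<ge> r"
proof -
  define f where "f v = (g v - c) \<bullet> (g v - c)" for v
  define F where "F v = 2 * ((g v - c) \<bullet> g1 v)" for v
  have dgc: "((\<lambda>v. g v - c) has_vector_derivative g1 v) (at v)" for v
    using has_vector_derivative_diff[OF d1 has_vector_derivative_const] by simp
  have df: "(f has_real_derivative F v) (at v)" for v
  proof -
    have "(f has_real_derivative ((g v - c) \<bullet> g1 v + g1 v \<bullet> (g v - c))) (at v)"
      unfolding f_def by (rule inner_deriv[OF dgc dgc])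
    then show ?thesis unfolding F_def by (simp add: inner_commute)
  qed
  have dF: "(F has_real_derivative 2 * ((g v - c) \<bullet> g2 v + 1)) (at v)" for v
  proof -
    have "((\<lambda>v. (g v - c) \<bullet> g1 v) has_real_derivative ((g v - c) \<bullet> g2 v + g1 v \<bullet> g1 v)) (at v)"
      by (rule inner_deriv[OF dgc d2])
    moreover have "g1 v \<bullet> g1 v = 1" using n1[of v] by (simp add: power2_norm_eq_inner[symmetric])
    ultimately have "((\<lambda>v. (g v - c) \<bullet> g1 v) has_real_derivative ((g v - c) \<bullet> g2 v + 1)) (at v)"
      by simp
    from DERIV_cmult[OF this, of 2] show ?thesis unfolding F_def[abs_def] .
  qed
  have Fpos: "2 * ((g v - c) \<bullet> g2 v + 1) \<ge> 0" if v: "\<bar>v - s0\<bar> \<le> \<eta>" for v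
  proof -
    have "norm (g v - g t) \<le> \<bar>v - t\<bar>" by (rule lipschitz_curve[OF d1 n1])
    also have "\<dots> \<le> 2 * \<eta>" using v t by linarith
    finally have "norm (g v - c) \<le> 2 * \<eta> + r"
      using norm_triangle_ineq[of "g v - g t" "g t - c"] r by simp
    then have "norm (g v - c) * norm (g2 v) \<le> (2 * \<eta> + r) * \<kappa>"
      using bnd[OF v] kap(1) by (meson mult_mono norm_ge_zero order_trans)
    moreover have "\<bar>(g v - c) \<bullet> g2 v\<bar> \<le> norm (g v - c) * norm (g2 v)"
      by (rule Cauchy_Schwarz_ineq2)
    ultimately show ?thesis using kap(2) by (simp add: algebra_simps)
  qed
  have Ft: "F t = 0" unfolding F_def using orth by simp
  have ft: "f t = r\<^sup>2" unfolding f_def using r by (metis power2_norm_eq_inner)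
  have "f u \<ge> f t"
  proof (cases "t \<le> u")
    case True
    show ?thesis
    proof (rule DERIV_nonneg_imp_nondecreasing[OF True])
      fix x assume x: "t \<le> x" "x \<le> u"
      have "F t \<le> F x"
      proof (rule DERIV_nonneg_imp_nondecreasing[OF x(1)])
        fix y assume "t \<le> y" "y \<le> x"
        then have "\<bar>y - s0\<bar> \<le> \<eta>" using t u x by linarith
        then show "\<exists>z. (F has_real_derivative z) (at y) \<and> z \<ge> 0" using dF Fpos by blast
      qed
      then show "\<exists>z. (f has_real_derivative z) (at x) \<and> z \<ge> 0" using df Ft by auto
    qed
  next
    case False
    then have tu: "u \<le> t" by simp
    show ?thesis
    proof (rule DERIV_nonpos_imp_nonincreasing[OF tu])
      fix x assume x: "u \<le> x" "x \<le> t"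
      have "F x \<le> F t"
      proof (rule DERIV_nonneg_imp_nondecreasing[OF x(2)])
        fix y assume "x \<le> y" "y \<le> t"
        then have "\<bar>y - s0\<bar> \<le> \<eta>" using t u x by linarith
        then show "\<exists>z. (F has_real_derivative z) (at y) \<and> z \<ge> 0" using dF Fpos by blast
      qed
      then show "\<exists>z. (f has_real_derivative z) (at x) \<and> z \<le> 0" using df Ft by auto
    qed
  qed
  then have "r\<^sup>2 \<le> (norm (g u - c))\<^sup>2" using ft unfolding f_def by (simp add: power2_norm_eq_inner)
  then show ?thesis using r by (meson norm_ge_zero power2_le_imp_le)
qed

lemma first_order:
  fixes g :: "real \<Rightarrow> 'a::real_inner"
  assumes d1: "(g has_vector_derivative g1) (at t)"
    and mn: "\<And>u. dist x (g t) \<le> dist x (g u)"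
  shows "(g t - x) \<bullet> g1 = 0"
proof -
  define f where "f v = (g v - x) \<bullet> (g v - x)" for v
  have dgc: "((\<lambda>v. g v - x) has_vector_derivative g1) (at t)"
    using has_vector_derivative_diff[OF d1 has_vector_derivative_const] by simp
  have "(f has_real_derivative ((g t - x) \<bullet> g1 + g1 \<bullet> (g t - x))) (at t)"
    unfolding f_def by (rule inner_deriv[OF dgc dgc])
  moreover have "\<forall>y. \<bar>t - y\<bar> < 1 \<longrightarrow> f t \<le> f y"
  proof (intro allI impI)
    fix y
    have "dist x (g t) \<le> dist x (g y)" by (rule mn)
    then have "(dist x (g t))\<^sup>2 \<le> (dist x (g y))\<^sup>2" by (simp add: power_mono)
    then show "f t \<le> f y" unfolding f_def power2_norm_eq_inner[symmetric]
      by (simp add: dist_norm norm_minus_commute)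
  qed
  ultimately have "(g t - x) \<bullet> g1 + g1 \<bullet> (g t - x) = 0"
    using DERIV_local_min[where d=1] by fastforce
  then show ?thesis by (simp add: inner_commute)
qed

locale pcurve =
  fixes \<gamma> g1 g2 :: "real \<Rightarrow> complex" and L :: real
  assumes L: "L > 0" and per: "\<And>s. \<gamma> (s + L) = \<gamma> s" and inj: "inj_on \<gamma> {0..<L}"
    and d1: "\<And>t. (\<gamma> has_vector_derivative g1 t) (at t)"
    and d2: "\<And>t. (g1 has_vector_derivative g2 t) (at t)"
    and n1: "\<And>t. norm (g1 t) = 1" and n2: "\<And>t. norm (g2 t) < 1"
    and c2: "continuous_on UNIV g2"
begin

lemma per_nat: "\<gamma> (s + real n * L) = \<gamma> s"
proof (induction n arbitrary: s)
  case (Suc n)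
  have "\<gamma> (s + real (Suc n) * L) = \<gamma> ((s + real n * L) + L)" by (simp add: algebra_simps)
  then show ?case using per Suc by simp
qed simp

lemma per_int: "\<gamma> (s + of_int m * L) = \<gamma> s"
proof (cases "m \<ge> 0")
  case True
  then show ?thesis using per_nat[of s "nat m"] by simp
next
  case False
  then have "\<gamma> ((s + of_int m * L) + real (nat (-m)) * L) = \<gamma> (s + of_int m * L)"
    by (rule_tac per_nat)
  then show ?thesis using False by simp
qed

lemma reduce: "\<exists>v m. v \<in> {0..<L} \<and> v = u + of_int m * L"
proof -
  define m where "m = - floor (u / L)"
  have "floor (u/L) \<le> u/L" "u/L < floor (u/L) + 1" by linarith+
  then have "floor (u/L) * L \<le> u" "u < (floor (u/L) + 1) * L" using L
    by (metis pos_le_divide_eq, metis pos_divide_less_eq)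
  then have "u + of_int m * L \<in> {0..<L}" unfolding m_def by (simp add: algebra_simps)
  then show ?thesis by blast
qed

definition "C = \<gamma> ` {0..L}"

lemma in_C: "\<gamma> u \<in> C"
proof -
  obtain v m where "v \<in> {0..<L}" "v = u + of_int m * L" using reduce by blast
  then show ?thesis unfolding C_def using per_int[of u m] by (metis atLeastLessThan_iff atLeastAtMost_iff image_eqI less_imp_le)
qed

lemma cont: "continuous_on S \<gamma>"
  using d1 by (meson continuous_at_imp_continuous_on has_vector_derivative_continuous)

lemma compact_C: "compact C"
  unfolding C_def by (rule compact_continuous_image[OF cont compact_Icc])

lemma inj_local:
  assumes "\<eta> > 0"
  shows "\<exists>\<epsilon>>0. \<forall>u. dist (\<gamma> u) (\<gamma> s0) < \<epsilon> \<longrightarrow> (\<exists>u'. \<gamma> u' = \<gamma> u \<and> \<bar>u' - s0\<bar> < \<eta>)"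
proof -
  define K where "K = {0..L} \<inter> (\<Inter>m. {v. \<eta> \<le> \<bar>v + of_int m * L - s0\<bar>})"
  have "closed (\<Inter>m. {v::real. \<eta> \<le> \<bar>v + of_int m * L - s0\<bar>})"
    by (rule closed_INT, intro ballI closed_Collect_le continuous_intros)
  then have cK: "compact K" unfolding K_def by (intro compact_Int_closed compact_Icc)
  have key: "\<exists>u'. \<gamma> u' = \<gamma> u \<and> \<bar>u' - s0\<bar> < \<eta>" if "\<forall>v\<in>K. \<gamma> v \<noteq> \<gamma> u" for u
  proof -
    obtain v m where v: "v \<in> {0..<L}" "v = u + of_int m * L" using reduce by blast
    have gv: "\<gamma> v = \<gamma> u" using v per_int by simp
    then have "v \<notin> K" using that by blast
    then obtain k where "\<bar>v + of_int k * L - s0\<bar> < \<eta>" using v unfolding K_def by (auto simp: not_le)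
    moreover have "\<gamma> (v + of_int k * L) = \<gamma> u" using gv per_int by simp
    ultimately show ?thesis by blast
  qed
  show ?thesis
  proof (cases "K = {}")
    case True
    then show ?thesis using key by (intro exI[of _ 1]) auto
  next
    case False
    have "continuous_on K (\<lambda>v. dist (\<gamma> v) (\<gamma> s0))"
      by (intro continuous_intros cont)
    then obtain v0 where v0: "v0 \<in> K" "\<And>v. v \<in> K \<Longrightarrow> dist (\<gamma> v0) (\<gamma> s0) \<le> dist (\<gamma> v) (\<gamma> s0)"
      using continuous_attains_inf[OF cK False] by blast
    have ne: "\<gamma> v0 \<noteq> \<gamma> s0"
    proof
      assume eq: "\<gamma> v0 = \<gamma> s0"
      obtain s1 m where s1: "s1 \<in> {0..<L}" "s1 = s0 + of_int m * L" using reduce by blast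
      have g1: "\<gamma> s1 = \<gamma> s0" using s1 per_int by simp
      have v0K: "v0 \<in> {0..L}" "\<And>k. \<eta> \<le> \<bar>v0 + of_int k * L - s0\<bar>" using v0(1) unfolding K_def by auto
      show False
      proof (cases "v0 < L")
        case True
        then have "v0 = s1" using inj s1 g1 eq v0K(1) by (auto simp: inj_on_def)
        then show False using v0K(2)[of "-m"] s1 assms by simp
      next
        case False
        then have "v0 = L" using v0K(1) by simp
        then have "\<gamma> 0 = \<gamma> s1" using per[of 0] eq g1 by simp
        then have "s1 = 0" using inj s1 L by (auto simp: inj_on_def)
        then show False using v0K(2)[of "-m-1"] s1 assms \<open>v0 = L\<close> by (simp add: algebra_simps)
      qed
    qed
    show ?thesis
    proof (rule exI[of _ "dist (\<gamma> v0) (\<gamma> s0)"], intro conjI allI impI)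
      show "dist (\<gamma> v0) (\<gamma> s0) > 0" using ne by simp
    next
      fix u assume "dist (\<gamma> u) (\<gamma> s0) < dist (\<gamma> v0) (\<gamma> s0)"
      then have "\<forall>v\<in>K. \<gamma> v \<noteq> \<gamma> u" using v0(2) by force
      then show "\<exists>u'. \<gamma> u' = \<gamma> u \<and> \<bar>u' - s0\<bar> < \<eta>" by (rule key)
    qed
  qed
qed

lemma C_eq: "C = range \<gamma>"
  using in_C unfolding C_def by auto

lemma geo:
  "\<exists>\<epsilon>>0. \<epsilon> \<le> 1/2 \<and> (\<forall>x\<in>ball (\<gamma> s0) \<epsilon> - C.
     (\<exists>c. dist x c < 1 \<and> ball c 1 \<inter> ball (\<gamma> s0) \<epsilon> \<inter> C = {}) \<and>
     (\<exists>c. dist x c \<le> 1 \<and> cball c 1 \<inter> ball (\<gamma> s0) \<epsilon> \<inter> C = {}))"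
proof -
  define p where "p = \<gamma> s0"
  define \<kappa> where "\<kappa> = (norm (g2 s0) + 1) / 2"
  have k0: "0 \<le> \<kappa>" "\<kappa> < 1" "norm (g2 s0) < \<kappa>" using n2[of s0] unfolding \<kappa>_def by auto
  have "continuous (at s0) g2" using c2 by (simp add: continuous_on_eq_continuous_at)
  then obtain \<eta>0 where \<eta>0: "\<eta>0 > 0" "\<And>v. dist v s0 < \<eta>0 \<Longrightarrow> dist (g2 v) (g2 s0) < \<kappa> - norm (g2 s0)"
    unfolding continuous_at_eps_delta using k0(3) by (meson diff_gt_0_iff_gt)
  define \<eta> where "\<eta> = min (\<eta>0/2) ((1 - \<kappa>)/3)"
  have \<eta>: "\<eta> > 0" "\<kappa> * (1 + 3 * \<eta>) \<le> 1"
  proof -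
    show "\<eta> > 0" unfolding \<eta>_def using \<eta>0 k0 by auto
    have "3 * \<eta> \<le> 1 - \<kappa>" unfolding \<eta>_def by (simp add: min_def)
    moreover have "\<kappa> * (3 * \<eta>) \<le> 3 * \<eta>" using k0 \<open>\<eta> > 0\<close>
      by (intro mult_left_le_one_le) auto
    ultimately have "\<kappa> * (3 * \<eta>) \<le> 1 - \<kappa>" by linarith
    then show "\<kappa> * (1 + 3 * \<eta>) \<le> 1" by (simp add: algebra_simps)
  qed
  have bnd: "norm (g2 v) \<le> \<kappa>" if "\<bar>v - s0\<bar> \<le> \<eta>" for v
  proof -
    have "dist v s0 < \<eta>0" using that \<eta>0 unfolding \<eta>_def dist_real_def by linarith
    then have "dist (g2 v) (g2 s0) < \<kappa> - norm (g2 s0)" by (rule \<eta>0(2))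
    then show ?thesis using norm_triangle_ineq2[of "g2 v" "g2 s0"] by (simp add: dist_norm)
  qed
  obtain \<epsilon>1 where \<epsilon>1: "\<epsilon>1 > 0" "\<And>u. dist (\<gamma> u) (\<gamma> s0) < \<epsilon>1 \<Longrightarrow> \<exists>u'. \<gamma> u' = \<gamma> u \<and> \<bar>u' - s0\<bar> < \<eta>"
    using inj_local[OF \<eta>(1), of s0] by blast
  define \<epsilon> where "\<epsilon> = min (\<epsilon>1/2) (min \<eta> (1/2))"
  have \<epsilon>: "\<epsilon> > 0" "\<epsilon> \<le> 1/2" "\<epsilon> \<le> \<eta>" "2 * \<epsilon> \<le> \<epsilon>1" unfolding \<epsilon>_def using \<epsilon>1 \<eta> by auto
  have pC: "p \<in> C" unfolding p_def by (rule in_C)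
  have closedC: "closed C" using compact_C by (rule compact_imp_closed)
  have main: "(\<exists>c. dist x c < 1 \<and> ball c 1 \<inter> ball p \<epsilon> \<inter> C = {}) \<and>
     (\<exists>c. dist x c \<le> 1 \<and> cball c 1 \<inter> ball p \<epsilon> \<inter> C = {})" if x: "x \<in> ball p \<epsilon>" "x \<notin> C" for x
  proof -
    obtain y where y: "y \<in> C" "\<And>z. z \<in> C \<Longrightarrow> dist x y \<le> dist x z"
      using distance_attains_inf[OF closedC, of x] pC by blast
    have xp: "dist x p < \<epsilon>" using x by (simp add: dist_commute)
    have xy: "dist x y < \<epsilon>" using y(2)[OF pC] xp by linarith
    have "dist y p < \<epsilon>1" using dist_triangle[of y p x] xp xy \<epsilon> by (simp add: dist_commute)
    moreover obtain t0 where "y = \<gamma> t0" using y(1) C_eq by auto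
    ultimately obtain t where t: "\<gamma> t = y" "\<bar>t - s0\<bar> < \<eta>" using \<epsilon>1(2) unfolding p_def by metis
    have "(\<gamma> t - x) \<bullet> g1 t = 0"
      by (rule first_order[OF d1]) (use y t in_C in auto)
    then have orth: "(y - x) \<bullet> g1 t = 0" using t by simp
    define d where "d = dist x y"
    have d: "d > 0" "d < \<epsilon>" using x y xy unfolding d_def by auto
    define c where "c r = y + (r / d) *\<^sub>R (x - y)" for r
    have far: "r \<le> norm (z - c r)" if r: "r > 0" "\<kappa> * (r + 2 * \<eta>) \<le> 1" and z: "z \<in> ball p \<epsilon>" "z \<in> C" for r z
    proof -
      obtain u0 where "z = \<gamma> u0" using z C_eq by auto
      moreover have "dist z (\<gamma> s0) < \<epsilon>1" using z \<epsilon> unfolding p_def by (simp add: dist_commute)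
      ultimately obtain u where u: "\<gamma> u = z" "\<bar>u - s0\<bar> < \<eta>" using \<epsilon>1(2) by metis
      have o2: "(\<gamma> t - c r) \<bullet> g1 t = 0"
        unfolding c_def using orth t(1) by (simp add: inner_diff_left inner_add_left algebra_simps)
      have "norm (\<gamma> t - c r) = \<bar>r / d\<bar> * norm (x - y)" unfolding c_def using t(1) by simp
      also have "\<dots> = r" using d r unfolding d_def by (simp add: dist_norm)
      finally have "norm (\<gamma> t - c r) = r" .
      from convex_est[of \<gamma> g1 g2 s0, OF d1 d2 n1 bnd k0(1) r(2) _ _ o2 this] t u
      show ?thesis by force
    qed
    have dc: "dist x (c r) = \<bar>d - r\<bar>" for r
    proof -
      have "x - c r = (1 - r / d) *\<^sub>R (x - y)" unfolding c_def by (simp add: algebra_simps)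
      then have "dist x (c r) = \<bar>1 - r / d\<bar> * d" unfolding d_def by (simp add: dist_norm)
      also have "\<dots> = \<bar>d - r\<bar>" 
      proof -
        have "\<bar>1 - r / d\<bar> * d = \<bar>(1 - r / d) * d\<bar>" using d by (simp add: abs_mult)
        also have "(1 - r / d) * d = d - r" using d by (simp add: field_simps)
        finally show ?thesis .
      qed
      finally show ?thesis .
    qed
    have A: "ball (c 1) 1 \<inter> ball p \<epsilon> \<inter> C = {}"
    proof (rule ccontr)
      assume "ball (c 1) 1 \<inter> ball p \<epsilon> \<inter> C \<noteq> {}"
      then obtain z where z: "dist (c 1) z < 1" "z \<in> ball p \<epsilon>" "z \<in> C" by auto
      have "\<kappa> * (1 + 2 * \<eta>) \<le> 1" using \<eta> k0 by (smt (verit) mult_left_mono)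
      then have "1 \<le> norm (z - c 1)" using far[of 1 z] z by simp
      then show False using z(1) by (simp add: dist_norm norm_minus_commute)
    qed
    have B: "cball (c (1 + d)) 1 \<inter> ball p \<epsilon> \<inter> C = {}"
    proof (rule ccontr)
      assume "cball (c (1 + d)) 1 \<inter> ball p \<epsilon> \<inter> C \<noteq> {}"
      then obtain z where z: "dist (c (1 + d)) z \<le> 1" "z \<in> ball p \<epsilon>" "z \<in> C" by auto
      have "\<kappa> * ((1 + d) + 2 * \<eta>) \<le> \<kappa> * (1 + 3 * \<eta>)" using k0 d \<epsilon> by (intro mult_left_mono) auto
      then have "1 + d \<le> norm (z - c (1 + d))" using far[of "1 + d" z] z d \<eta> by simp
      then show False using z(1) d by (simp add: dist_norm norm_minus_commute)
    qed
    show ?thesis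
    proof (intro conjI exI)
      show "dist x (c 1) < 1" using dc d \<epsilon> by simp
      show "dist x (c (1 + d)) \<le> 1" using dc d by simp
    qed (use A B in auto)
  qed
  show ?thesis using \<epsilon> main unfolding p_def by blast
qed

lemma loc:
  "\<exists>\<epsilon>>0. \<epsilon> \<le> 1/2 \<and> (\<forall>x\<in>ball x0 \<epsilon> - C.
     (\<exists>c. dist x c < 1 \<and> ball c 1 \<inter> ball x0 \<epsilon> \<inter> C = {}) \<and>
     (\<exists>c. dist x c \<le> 1 \<and> cball c 1 \<inter> ball x0 \<epsilon> \<inter> C = {}))"
proof (cases "x0 \<in> C")
  case True
  then obtain s0 where "x0 = \<gamma> s0" using C_eq by auto
  then show ?thesis using geo[of s0] by simp
next
  case False
  have "open (- C)" using compact_C by (simp add: compact_imp_closed open_Compl)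
  then obtain e where e: "e > 0" "ball x0 e \<subseteq> - C" using False open_contains_ball by blast
  define \<epsilon> where "\<epsilon> = min e (1/2)"
  have E: "ball x0 \<epsilon> \<inter> C = {}" using e unfolding \<epsilon>_def by auto
  have "(dist x x < 1 \<and> ball x 1 \<inter> ball x0 \<epsilon> \<inter> C = {}) \<and>
     (dist x x \<le> 1 \<and> cball x 1 \<inter> ball x0 \<epsilon> \<inter> C = {})" for x
    using E by auto
  moreover have "\<epsilon> > 0" "\<epsilon> \<le> 1/2" using e unfolding \<epsilon>_def by auto
  ultimately show ?thesis by meson
qed

end

lemma lvl2: "N A - N A' \<in> draw_level N 2"
  by (auto simp: numeral_2_eq_2)

lemma outside_conn:
  assumes "connected T" "T \<inter> C = {}" "x \<in> T" "x \<notin> C \<union> inside C"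
  shows "T \<inter> (C \<union> inside C) = {}"
proof -
  have xo: "x \<in> outside C" using assms(4) inside_Un_outside[of C] by blast
  have "y \<notin> inside C" if y: "y \<in> T" for y
  proof
    assume yi: "y \<in> inside C"
    have "connected_component (- C) x y"
      unfolding connected_component_def using assms y by blast
    then have "connected_component_set (- C) y = connected_component_set (- C) x"
      by (simp add: connected_component_eq)
    then show False using yi xo unfolding inside_def outside_def by auto
  qed
  then show ?thesis using assms(2) by blast
qed

lemma draw_open:
  assumes e: "\<epsilon> > 0" "\<epsilon> \<le> 1/2"
    and P: "\<forall>x\<in>ball x0 \<epsilon> - C. \<exists>c. dist x c < 1 \<and> ball c 1 \<inter> ball x0 \<epsilon> \<inter> C = {}"
  shows "\<exists>D\<in>drawable_sets. ball x0 \<epsilon> \<inter> (C \<union> inside C) = ball x0 \<epsilon> \<inter> D"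
proof -
  define U where "U = ball x0 \<epsilon>"
  define B where "B = C \<union> inside C"
  define A2 where "A2 = {c. ball c 1 \<inter> U \<inter> B = {}}"
  define D where "D = Nbhd {x0} - Nbhd A2"
  have "D \<in> drawable_sets" unfolding D_def drawable_sets_def using lvl2 by blast
  moreover have "U \<inter> B = U \<inter> D"
  proof (intro equalityI subsetI)
    fix x assume x: "x \<in> U \<inter> B"
    have "x \<in> Nbhd {x0}" using x e unfolding U_def Nbhd_def by (auto simp: dist_commute)
    moreover have "x \<notin> Nbhd A2"
    proof
      assume "x \<in> Nbhd A2"
      then obtain a where "a \<in> A2" "dist x a < 1" unfolding Nbhd_def by auto
      then show False using x unfolding A2_def by (auto simp: dist_commute)
    qed
    ultimately show "x \<in> U \<inter> D" using x unfolding D_def by auto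
  next
    fix x assume x: "x \<in> U \<inter> D"
    show "x \<in> U \<inter> B"
    proof (rule ccontr)
      assume nB: "x \<notin> U \<inter> B"
      then have "x \<notin> C" using x unfolding B_def by auto
      then have "x \<in> ball x0 \<epsilon> - C" using x unfolding U_def by auto
      then obtain c where c: "dist x c < 1" "ball c 1 \<inter> U \<inter> C = {}" using P unfolding U_def by blast
      have "connected (ball c 1 \<inter> U)" unfolding U_def by (intro convex_connected convex_Int convex_ball)
      moreover have "x \<in> ball c 1 \<inter> U" using c(1) x by (auto simp: dist_commute)
      moreover have "x \<notin> C \<union> inside C" using x nB unfolding B_def by auto
      ultimately have "ball c 1 \<inter> U \<inter> (C \<union> inside C) = {}" using outside_conn[OF _ c(2)] by blast
      then have "ball c 1 \<inter> U \<inter> B = {}" unfolding B_def .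
      then have "c \<in> A2" unfolding A2_def by simp
      then have "x \<in> Nbhd A2" using c(1) unfolding Nbhd_def by auto
      then show False using x unfolding D_def by auto
    qed
  qed
  ultimately show ?thesis unfolding U_def B_def by blast
qed

lemma draw_closed:
  assumes e: "\<epsilon> > 0" "\<epsilon> \<le> 1/2"
    and P: "\<forall>x\<in>ball x0 \<epsilon> - C. \<exists>c. dist x c \<le> 1 \<and> cball c 1 \<inter> ball x0 \<epsilon> \<inter> C = {}"
  shows "\<exists>D\<in>closed_disk_drawable_sets. ball x0 \<epsilon> \<inter> (C \<union> inside C) = ball x0 \<epsilon> \<inter> D"
proof -
  define U where "U = ball x0 \<epsilon>"
  define B where "B = C \<union> inside C"
  define A2 where "A2 = {c. cball c 1 \<inter> U \<inter> B = {}}"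
  define D where "D = Nbhd_le {x0} - Nbhd_le A2"
  have "D \<in> closed_disk_drawable_sets" unfolding D_def closed_disk_drawable_sets_def using lvl2 by blast
  moreover have "U \<inter> B = U \<inter> D"
  proof (intro equalityI subsetI)
    fix x assume x: "x \<in> U \<inter> B"
    have "x \<in> Nbhd_le {x0}" using x e unfolding U_def Nbhd_le_def by (auto simp: dist_commute)
    moreover have "x \<notin> Nbhd_le A2"
    proof
      assume "x \<in> Nbhd_le A2"
      then obtain a where "a \<in> A2" "dist x a \<le> 1" unfolding Nbhd_le_def by auto
      then show False using x unfolding A2_def by (auto simp: dist_commute)
    qed
    ultimately show "x \<in> U \<inter> D" using x unfolding D_def by auto
  next
    fix x assume x: "x \<in> U \<inter> D"
    show "x \<in> U \<inter> B"
    proof (rule ccontr)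
      assume nB: "x \<notin> U \<inter> B"
      then have "x \<notin> C" using x unfolding B_def by auto
      then have "x \<in> ball x0 \<epsilon> - C" using x unfolding U_def by auto
      then obtain c where c: "dist x c \<le> 1" "cball c 1 \<inter> U \<inter> C = {}" using P unfolding U_def by blast
      have "connected (cball c 1 \<inter> U)" unfolding U_def by (intro convex_connected convex_Int convex_ball convex_cball)
      moreover have "x \<in> cball c 1 \<inter> U" using c(1) x by (auto simp: dist_commute)
      moreover have "x \<notin> C \<union> inside C" using x nB unfolding B_def by auto
      ultimately have "cball c 1 \<inter> U \<inter> (C \<union> inside C) = {}" using outside_conn[OF _ c(2)] by blast
      then have "cball c 1 \<inter> U \<inter> B = {}" unfolding B_def .
      then have "c \<in> A2" unfolding A2_def by simp
      then have "x \<in> Nbhd_le A2" using c(1) unfolding Nbhd_le_def by auto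
      then show False using x unfolding D_def by auto
    qed
  qed
  ultimately show ?thesis unfolding U_def B_def by blast
qed


theorem theorem4p2:
  fixes \<gamma> :: "real \<Rightarrow> complex" and L :: real
  assumes "L > 0"
    and "smooth_curve \<gamma>"
    and "\<And>s. \<gamma> (s + L) = \<gamma> s"
    and "inj_on \<gamma> {0..<L}"
    and "\<And>s. norm (vector_derivative \<gamma> (at s)) = 1"
    and "\<And>s k. second_deriv \<gamma> s = complex_of_real k * unit_normal \<gamma> s \<Longrightarrow> \<bar>k\<bar> < 1"
  shows "locally_drawable (\<gamma> ` {0..L} \<union> inside (\<gamma> ` {0..L}))
       \<and> locally_closed_disk_drawable (\<gamma> ` {0..L} \<union> inside (\<gamma> ` {0..L}))"
proof -
  obtain D :: "nat \<Rightarrow> real \<Rightarrow> complex" where D0: "D 0 = \<gamma>"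
    and Dd: "\<And>n t. (D n has_vector_derivative D (Suc n) t) (at t)"
    using assms(2) unfolding smooth_curve_def by blast
  have d1: "(\<gamma> has_vector_derivative D 1 t) (at t)" for t using Dd[of 0 t] D0 by simp
  have d2: "(D 1 has_vector_derivative D 2 t) (at t)" for t using Dd[of 1 t] by (simp add: numeral_2_eq_2)
  have d3: "(D 2 has_vector_derivative D 3 t) (at t)" for t using Dd[of 2 t] by (simp add: numeral_3_eq_3 numeral_2_eq_2)
  have vd: "vector_derivative \<gamma> (at s) = D 1 s" for s using d1 by (rule vector_derivative_at)
  have n1: "norm (D 1 s) = 1" for s using assms(5) vd by simp
  have vdf: "(\<lambda>t. vector_derivative \<gamma> (at t)) = D 1" using vd by auto
  have sd: "second_deriv \<gamma> s = D 2 s" for s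
    unfolding second_deriv_def vdf using d2 by (rule vector_derivative_at)
  have c2: "continuous_on UNIV (D 2)"
    using d3 by (meson continuous_at_imp_continuous_on has_vector_derivative_continuous)
  have n2: "norm (D 2 s) < 1" for s
  proof -
    have "((\<lambda>t. D 1 t \<bullet> D 1 t) has_real_derivative (D 1 s \<bullet> D 2 s + D 2 s \<bullet> D 1 s)) (at s)"
      by (rule inner_deriv[OF d2 d2])
    moreover have "(\<lambda>t. D 1 t \<bullet> D 1 t) = (\<lambda>t. 1)"
      using n1 by (auto simp: power2_norm_eq_inner[symmetric])
    ultimately have "((\<lambda>t. 1) has_real_derivative (D 1 s \<bullet> D 2 s + D 2 s \<bullet> D 1 s)) (at s)" by simp
    then have "D 1 s \<bullet> D 2 s + D 2 s \<bullet> D 1 s = 0"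
      using DERIV_const DERIV_unique by blast
    then have orth: "D 2 s \<bullet> D 1 s = 0" by (simp add: inner_commute)
    define w where "w = D 2 s * cnj (D 1 s)"
    have "Re w = 0" using orth unfolding w_def inner_complex_def by simp
    then have w: "w = complex_of_real (Im w) * \<i>" by (simp add: complex_eq_iff)
    have "D 1 s * cnj (D 1 s) = 1"
      using complex_norm_square[of "D 1 s"] n1[of s] by simp
    then have "D 2 s = w * D 1 s" unfolding w_def by (metis mult.assoc mult.commute mult_1_right)
    then have "second_deriv \<gamma> s = complex_of_real (Im w) * unit_normal \<gamma> s"
      unfolding sd unit_normal_def vd by (subst (asm) w) (simp add: mult_ac)
    then have "\<bar>Im w\<bar> < 1" by (rule assms(6))
    moreover have "norm (D 2 s) = \<bar>Im w\<bar>"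
    proof -
      have "norm w = norm (complex_of_real (Im w) * \<i>)" using arg_cong[OF w, of norm] .
      then have "norm w = \<bar>Im w\<bar>" by (simp add: norm_mult)
      then show ?thesis using \<open>D 2 s = w * D 1 s\<close> n1[of s] by (simp add: norm_mult)
    qed
    ultimately show ?thesis by simp
  qed
  interpret pcurve \<gamma> "D 1" "D 2" L
    by unfold_locales (use assms(1,3,4) d1 d2 n1 n2 c2 in auto)
  have CC: "C = \<gamma> ` {0..L}" by (simp add: C_def)
  have "locally_drawable (C \<union> inside C)"
    unfolding locally_drawable_def
  proof
    fix x0
    obtain \<epsilon> where e: "\<epsilon> > 0" "\<epsilon> \<le> 1/2" and P: "\<forall>x\<in>ball x0 \<epsilon> - C.
     (\<exists>c. dist x c < 1 \<and> ball c 1 \<inter> ball x0 \<epsilon> \<inter> C = {}) \<and>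
     (\<exists>c. dist x c \<le> 1 \<and> cball c 1 \<inter> ball x0 \<epsilon> \<inter> C = {})" using loc[of x0] by blast
    have "\<exists>D\<in>drawable_sets. ball x0 \<epsilon> \<inter> (C \<union> inside C) = ball x0 \<epsilon> \<inter> D"
      by (rule draw_open[OF e]) (use P in blast)
    then show "\<exists>U. open U \<and> x0 \<in> U \<and> (\<exists>D\<in>drawable_sets. U \<inter> (C \<union> inside C) = U \<inter> D)"
      using e by (intro exI[of _ "ball x0 \<epsilon>"]) auto
  qed
  moreover have "locally_closed_disk_drawable (C \<union> inside C)"
    unfolding locally_closed_disk_drawable_def
  proof
    fix x0
    obtain \<epsilon> where e: "\<epsilon> > 0" "\<epsilon> \<le> 1/2" and P: "\<forall>x\<in>ball x0 \<epsilon> - C.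
     (\<exists>c. dist x c < 1 \<and> ball c 1 \<inter> ball x0 \<epsilon> \<inter> C = {}) \<and>
     (\<exists>c. dist x c \<le> 1 \<and> cball c 1 \<inter> ball x0 \<epsilon> \<inter> C = {})" using loc[of x0] by blast
    have "\<exists>D\<in>closed_disk_drawable_sets. ball x0 \<epsilon> \<inter> (C \<union> inside C) = ball x0 \<epsilon> \<inter> D"
      by (rule draw_closed[OF e]) (use P in blast)
    then show "\<exists>U. open U \<and> x0 \<in> U \<and> (\<exists>D\<in>closed_disk_drawable_sets. U \<inter> (C \<union> inside C) = U \<inter> D)"
      using e by (intro exI[of _ "ball x0 \<epsilon>"]) auto
  qed
  ultimately show ?thesis unfolding CC by simp
qed

end
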